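(* For any $\theta_0=(\gamma_0,\mu_0,\sigma_0)\in(-1/2,\infty)\times\mathbb{R}\times(0,\infty)$, the three-parameter GEV family satisfies \[P_{\theta_0}\big(\mathbb{R}\setminus\bar S(\varepsilon)\big)=o(\varepsilon^2),\qquad\varepsilon\downarrow0.\]
   Context: $P_\theta$, $\theta=(\gamma,\mu,\sigma)\in\Theta=\mathbb{R}\times\mathbb{R}\times(0,\infty)$, is the GEV distribution with Lebesgue density $p_\theta(x)=\sigma^{-1}e^{-u}u^{\gamma+1}\mathbf 1(1+\gamma z>0)$, $z=(x-\mu)/\sigma$, $u=(1+\gamma z)^{-1/\gamma}$ for $\gamma\ne0$, $u=e^{-z}$ for $\gamma=0$. Its support is $S_\theta=\{x:\sigma+\gamma(x-\mu)>0\}$. $U_\varepsilon(\theta_0)=\{\theta\in\Theta:\|\theta-\theta_0\|<\varepsilon\}$ and $\bar S(\varepsilon)=\bigcap_{\theta\in U_\varepsilon(\theta_0)}S_\theta$. *)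

theory Defs
  imports "HOL-Analysis.Analysis" "HOL-Library.Landau_Symbols"
begin

text \<open>Parameters theta = (gamma, mu, sigma) :: real \<times> real \<times> real; the norm on this
product type is the Euclidean norm.\<close>

definition gev_param_space :: "(real \<times> real \<times> real) set" where
  "gev_param_space = {(\<gamma>, \<mu>, \<sigma>). \<sigma> > 0}"

definition gev_u :: "real \<times> real \<times> real \<Rightarrow> real \<Rightarrow> real" where
  "gev_u \<theta> x = (case \<theta> of (\<gamma>, \<mu>, \<sigma>) \<Rightarrow>
     (let z = (x - \<mu>) / \<sigma> in
      if \<gamma> = 0 then exp (- z) else (1 + \<gamma> * z) powr (- 1 / \<gamma>)))"

definition gev_density :: "real \<times> real \<times> real \<Rightarrow> real \<Rightarrow> real" where
  "gev_density \<theta> x = (case \<theta> of (\<gamma>, \<mu>, \<sigma>) \<Rightarrow>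
     (let z = (x - \<mu>) / \<sigma>; u = gev_u \<theta> x in
      if 1 + \<gamma> * z > 0 then (1 / \<sigma>) * exp (- u) * u powr (\<gamma> + 1) else 0))"

definition gev_measure :: "real \<times> real \<times> real \<Rightarrow> real measure" where
  "gev_measure \<theta> = density lborel (\<lambda>x. ennreal (gev_density \<theta> x))"

definition gev_support :: "real \<times> real \<times> real \<Rightarrow> real set" where
  "gev_support \<theta> = (case \<theta> of (\<gamma>, \<mu>, \<sigma>) \<Rightarrow> {x. \<sigma> + \<gamma> * (x - \<mu>) > 0})"

definition gev_nbhd :: "real \<times> real \<times> real \<Rightarrow> real \<Rightarrow> (real \<times> real \<times> real) set" where
  "gev_nbhd \<theta>0 \<epsilon> = {\<theta> \<in> gev_param_space. norm (\<theta> - \<theta>0) < \<epsilon>}"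

definition gev_common_support :: "real \<times> real \<times> real \<Rightarrow> real \<Rightarrow> real set" where
  "gev_common_support \<theta>0 \<epsilon> = (\<Inter>\<theta> \<in> gev_nbhd \<theta>0 \<epsilon>. gev_support \<theta>)"

end

theory Submission
  imports Defs
begin

lemma bad_bound:
  fixes \<gamma>0 \<mu>0 \<sigma>0 x \<epsilon> :: real
  assumes "x \<notin> gev_common_support (\<gamma>0,\<mu>0,\<sigma>0) \<epsilon>" "\<epsilon> \<le> 1"
  shows "\<sigma>0 + \<gamma>0*(x-\<mu>0) \<le> \<epsilon>*(2 + \<bar>\<gamma>0\<bar> + \<bar>x-\<mu>0\<bar>)"
proof -
  obtain \<gamma> \<mu> \<sigma> where n: "norm ((\<gamma>,\<mu>,\<sigma>) - (\<gamma>0,\<mu>0,\<sigma>0)) < \<epsilon>" and s: "\<not> 0 < \<sigma> + \<gamma>*(x-\<mu>)"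
    using assms(1) unfolding gev_common_support_def gev_nbhd_def gev_support_def by auto
  have n': "norm (\<gamma>-\<gamma>0, \<mu>-\<mu>0, \<sigma>-\<sigma>0) < \<epsilon>" using n by simp
  have g: "\<bar>\<gamma>-\<gamma>0\<bar> < \<epsilon>" using norm_fst_le[of "\<gamma>-\<gamma>0" "(\<mu>-\<mu>0, \<sigma>-\<sigma>0)"] n' by simp
  have m: "\<bar>\<mu>-\<mu>0\<bar> < \<epsilon>" using norm_snd_le[of "(\<mu>-\<mu>0, \<sigma>-\<sigma>0)" "\<gamma>-\<gamma>0"] norm_fst_le[of "\<mu>-\<mu>0" "\<sigma>-\<sigma>0"] n' by simp
  have sg: "\<bar>\<sigma>-\<sigma>0\<bar> < \<epsilon>" using norm_snd_le[of "(\<mu>-\<mu>0, \<sigma>-\<sigma>0)" "\<gamma>-\<gamma>0"] norm_snd_le[of "\<sigma>-\<sigma>0" "\<mu>-\<mu>0"] n' by simp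
  define t where "t = x - \<mu>0"
  have id: "\<sigma> + \<gamma>*(x-\<mu>) = \<sigma>0 + \<gamma>0*t + (\<sigma>-\<sigma>0) + (\<gamma>-\<gamma>0)*t - \<gamma>*(\<mu>-\<mu>0)"
    unfolding t_def by (simp add: algebra_simps)
  have a1: "\<bar>(\<gamma>-\<gamma>0)*t\<bar> \<le> \<epsilon>*\<bar>t\<bar>" using g by (simp add: abs_mult mult_right_mono)
  have a2: "\<bar>\<gamma>*(\<mu>-\<mu>0)\<bar> \<le> (\<bar>\<gamma>0\<bar>+1)*\<epsilon>"
  proof -
    have "\<bar>\<gamma>\<bar> \<le> \<bar>\<gamma>0\<bar> + 1" using g assms(2) by linarith
    then show ?thesis using m unfolding abs_mult by (intro mult_mono) auto
  qed
  have "\<sigma>0 + \<gamma>0*t \<le> \<epsilon> + \<epsilon>*\<bar>t\<bar> + (\<bar>\<gamma>0\<bar>+1)*\<epsilon>"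
    using id s sg a1 a2 by linarith
  then show ?thesis unfolding t_def by (simp add: algebra_simps)
qed
lemma dens_meas: "gev_density (g,m,s) \<in> borel_measurable borel"
  unfolding gev_density_def gev_u_def Let_def
  by measurable

lemma meas_le:
  fixes A B :: "real set" and g :: "real \<Rightarrow> real"
  assumes "A \<subseteq> B" "B \<in> sets borel"
    "\<And>x. x \<in> B \<Longrightarrow> gev_density (ga,m,s) x \<le> g x"
    "(\<integral>\<^sup>+x. ennreal (g x) * indicator B x \<partial>lborel) \<le> ennreal r" "0 \<le> r"
  shows "measure (gev_measure (ga,m,s)) A \<le> r"
proof (cases "A \<in> sets (gev_measure (ga,m,s))")
  case False
  then show ?thesis using assms(5) by (simp add: measure_notin_sets)
next
  case True
  have Bs: "B \<in> sets (gev_measure (ga,m,s))" using assms(2) by (simp add: gev_measure_def)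
  have "emeasure (gev_measure (ga,m,s)) A \<le> emeasure (gev_measure (ga,m,s)) B"
    using assms(1) Bs by (rule emeasure_mono)
  also have "\<dots> = (\<integral>\<^sup>+x. ennreal (gev_density (ga,m,s) x) * indicator B x \<partial>lborel)"
    unfolding gev_measure_def using dens_meas assms(2) by (subst emeasure_density) auto
  also have "\<dots> \<le> (\<integral>\<^sup>+x. ennreal (g x) * indicator B x \<partial>lborel)"
    by (intro nn_integral_mono) (auto simp: indicator_def intro!: ennreal_leI assms(3))
  also have "\<dots> \<le> ennreal r" by (rule assms(4))
  finally have "emeasure (gev_measure (ga,m,s)) A \<le> ennreal r" .
  then show ?thesis unfolding measure_def using assms(5) by (simp add: enn2real_leI)
qed

lemma exp_abs_int:
  fixes a :: real assumes "a > 0"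
  shows "(\<integral>\<^sup>+x. ennreal (exp (- a * \<bar>x\<bar>)) \<partial>lborel) \<le> ennreal (2 / a)"
proof -
  define g where "g x = indicator {0..} x * exp (- a * x)" for x :: real
  have gm: "g \<in> borel_measurable borel" unfolding g_def by measurable
  have gi: "(g has_integral 1/a) UNIV"
  proof -
    have "g = (\<lambda>x. if x \<in> {0..} then exp (- a * x) else 0)"
      by (auto simp: g_def indicator_def fun_eq_iff)
    then show ?thesis using has_integral_exp_minus_to_infinity[OF assms, of 0]
      by (simp only: has_integral_restrict_UNIV) simp
  qed
  have G: "(\<integral>\<^sup>+x. ennreal (g x) \<partial>lborel) = ennreal (1/a)"
    by (rule nn_integral_has_integral_lborel[OF gm _ gi]) (simp add: g_def)
  have G': "(\<integral>\<^sup>+x. ennreal (g (- x)) \<partial>lborel) = ennreal (1/a)"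
  proof -
    have "(\<integral>\<^sup>+x. ennreal (g x) \<partial>lborel) = ennreal \<bar>-1::real\<bar> * (\<integral>\<^sup>+x. ennreal (g (0 + (-1) * x)) \<partial>lborel)"
      by (rule nn_integral_real_affine) (use gm in auto)
    then show ?thesis using G by simp
  qed
  have "(\<integral>\<^sup>+x. ennreal (exp (- a * \<bar>x\<bar>)) \<partial>lborel) \<le> (\<integral>\<^sup>+x. ennreal (g x) + ennreal (g (- x)) \<partial>lborel)"
    by (intro nn_integral_mono) (auto simp: g_def indicator_def ennreal_plus[symmetric] simp del: ennreal_plus intro!: ennreal_leI)
  also have "\<dots> = ennreal (1/a) + ennreal (1/a)"
    using gm by (subst nn_integral_add) (auto simp: G G')
  also have "\<dots> = ennreal (2/a)" using assms by (simp add: ennreal_plus[symmetric] del: ennreal_plus)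
  finally show ?thesis .
qed

lemma dens_nz:
  fixes \<gamma>0 \<mu>0 \<sigma>0 x :: real
  assumes "\<gamma>0 \<noteq> 0" "\<sigma>0 > 0"
  shows "gev_density (\<gamma>0,\<mu>0,\<sigma>0) x = (if 0 < \<sigma>0 + \<gamma>0*(x-\<mu>0) then (1/\<sigma>0) * exp (- (((\<sigma>0 + \<gamma>0*(x-\<mu>0))/\<sigma>0) powr (-1/\<gamma>0))) * (((\<sigma>0 + \<gamma>0*(x-\<mu>0))/\<sigma>0) powr (-1/\<gamma>0)) powr (\<gamma>0+1) else 0)"
proof -
  have e: "1 + \<gamma>0*((x-\<mu>0)/\<sigma>0) = (\<sigma>0 + \<gamma>0*(x-\<mu>0))/\<sigma>0" using assms by (simp add: field_simps)
  have p: "0 < (\<sigma>0 + \<gamma>0*(x-\<mu>0))/\<sigma>0 \<longleftrightarrow> 0 < \<sigma>0 + \<gamma>0*(x-\<mu>0)" using assms by (simp add: zero_less_divide_iff)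
  show ?thesis unfolding gev_density_def gev_u_def Let_def using assms e p by simp
qed

lemma nz_case:
  fixes \<gamma>0 \<mu>0 \<sigma>0 \<epsilon> D Bd :: real
  assumes g0: "\<gamma>0 \<noteq> 0" and s0: "\<sigma>0 > 0" and e0: "0 < \<epsilon>" "\<epsilon> \<le> 1" "\<epsilon> \<le> \<bar>\<gamma>0\<bar>/2"
  and D: "D = 2*(2+\<bar>\<gamma>0\<bar>+\<sigma>0/\<bar>\<gamma>0\<bar>)"
  and bd: "\<And>x. 0 < \<sigma>0+\<gamma>0*(x-\<mu>0) \<Longrightarrow> \<sigma>0+\<gamma>0*(x-\<mu>0) \<le> D*\<epsilon> \<Longrightarrow> gev_density (\<gamma>0,\<mu>0,\<sigma>0) x \<le> Bd"
  and Bd: "0 \<le> Bd"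
  shows "measure (gev_measure (\<gamma>0,\<mu>0,\<sigma>0)) (UNIV - gev_common_support (\<gamma>0,\<mu>0,\<sigma>0) \<epsilon>) \<le> Bd * (2*(D*\<epsilon>/\<bar>\<gamma>0\<bar>))"
proof -
  define c where "c = \<mu>0 - \<sigma>0/\<gamma>0"
  define L where "L = D*\<epsilon>/\<bar>\<gamma>0\<bar>"
  have Dpos: "D > 0" unfolding D using s0 g0 by (simp add: add_pos_nonneg)
  have gpos: "\<bar>\<gamma>0\<bar> > 0" using g0 by simp
  have Lpos: "L \<ge> 0" unfolding L_def using Dpos e0 by simp
  let ?B = "{x. \<sigma>0+\<gamma>0*(x-\<mu>0) \<le> D*\<epsilon>}"
  show ?thesis
  proof (rule meas_le[where B = ?B and g = "\<lambda>x. Bd * indicator {c-L..c+L} x"])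
    show "UNIV - gev_common_support (\<gamma>0, \<mu>0, \<sigma>0) \<epsilon> \<subseteq> ?B"
    proof
      fix x assume "x \<in> UNIV - gev_common_support (\<gamma>0, \<mu>0, \<sigma>0) \<epsilon>"
      then have bb: "\<sigma>0 + \<gamma>0*(x-\<mu>0) \<le> \<epsilon>*(2 + \<bar>\<gamma>0\<bar> + \<bar>x-\<mu>0\<bar>)" using bad_bound e0 by blast
      define w where "w = \<sigma>0 + \<gamma>0*(x-\<mu>0)"
      define t where "t = x - \<mu>0"
      have "w \<le> D*\<epsilon>"
      proof (cases "w \<le> 0")
        case True then show ?thesis using Dpos e0 by (simp add: order_trans[OF _ mult_nonneg_nonneg])
      next
        case False
        have "\<gamma>0 * t = w - \<sigma>0" unfolding w_def t_def by simp
        then have gt: "\<bar>\<gamma>0\<bar> * \<bar>t\<bar> \<le> w + \<sigma>0" using False s0 by (simp add: abs_mult[symmetric])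
        have bb': "w \<le> \<epsilon>*(2 + \<bar>\<gamma>0\<bar>) + \<epsilon>*\<bar>t\<bar>" using bb unfolding w_def t_def by (simp add: algebra_simps)
        have "\<bar>\<gamma>0\<bar> * w \<le> \<bar>\<gamma>0\<bar> * (\<epsilon>*(2 + \<bar>\<gamma>0\<bar>)) + \<epsilon>*(\<bar>\<gamma>0\<bar> * \<bar>t\<bar>)"
          using mult_left_mono[OF bb', of "\<bar>\<gamma>0\<bar>"] by (simp add: algebra_simps)
        also have "\<epsilon>*(\<bar>\<gamma>0\<bar> * \<bar>t\<bar>) \<le> \<epsilon>*(w+\<sigma>0)" using gt e0 by (simp add: mult_left_mono)
        also have "\<epsilon>*(w+\<sigma>0) \<le> \<bar>\<gamma>0\<bar>/2 * w + \<epsilon>*\<sigma>0" using e0 False mult_right_mono[OF e0(3), of w] by (simp add: algebra_simps)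
        finally have "\<bar>\<gamma>0\<bar> * w \<le> \<bar>\<gamma>0\<bar> * (\<epsilon>*(2 + \<bar>\<gamma>0\<bar>)) + \<bar>\<gamma>0\<bar>/2 * w + \<epsilon>*\<sigma>0" by simp
        then have "\<bar>\<gamma>0\<bar> * w \<le> \<bar>\<gamma>0\<bar> * (2*\<epsilon>*(2 + \<bar>\<gamma>0\<bar>) + 2*\<epsilon>*\<sigma>0/\<bar>\<gamma>0\<bar>)"
          using gpos by (simp add: algebra_simps)
        then have "w \<le> 2*\<epsilon>*(2 + \<bar>\<gamma>0\<bar>) + 2*\<epsilon>*\<sigma>0/\<bar>\<gamma>0\<bar>" using gpos by simp
        then show ?thesis unfolding D by (simp add: algebra_simps)
      qed
      then show "x \<in> ?B" unfolding w_def by simp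
    qed
    show "?B \<in> sets borel" by measurable
    fix x assume xB: "x \<in> ?B"
    show "gev_density (\<gamma>0, \<mu>0, \<sigma>0) x \<le> Bd * indicator {c-L..c+L} x"
    proof (cases "0 < \<sigma>0+\<gamma>0*(x-\<mu>0)")
      case False then show ?thesis using dens_nz[OF g0 s0, of \<mu>0 x] Bd by (simp add: indicator_def)
    next
      case True
      have "x - c = (\<sigma>0+\<gamma>0*(x-\<mu>0))/\<gamma>0" unfolding c_def using g0 by (simp add: field_simps)
      then have "\<bar>x - c\<bar> = (\<sigma>0+\<gamma>0*(x-\<mu>0))/\<bar>\<gamma>0\<bar>" using True by simp
      also have "\<dots> \<le> L" unfolding L_def using xB gpos by (simp add: divide_right_mono)
      finally have "x \<in> {c-L..c+L}" by auto
      then show ?thesis using bd[OF True] xB by simp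
    qed
  next
    have "(\<integral>\<^sup>+x. ennreal (Bd * indicator {c-L..c+L} x) * indicator ?B x \<partial>lborel) \<le> (\<integral>\<^sup>+x. ennreal Bd * indicator {c-L..c+L} x \<partial>lborel)"
      by (intro nn_integral_mono) (auto simp: indicator_def)
    also have "\<dots> = ennreal Bd * ennreal (2*L)" using Lpos by (subst nn_integral_cmult_indicator) auto
    also have "\<dots> = ennreal (Bd * (2*(D*\<epsilon>/\<bar>\<gamma>0\<bar>)))" using Bd Lpos by (simp add: ennreal_mult[symmetric] L_def)
    finally show "(\<integral>\<^sup>+x. ennreal (Bd * indicator {c-L..c+L} x) * indicator ?B x \<partial>lborel) \<le> ennreal (Bd * (2*(D*\<epsilon>/\<bar>\<gamma>0\<bar>)))" .
    show "0 \<le> Bd * (2*(D*\<epsilon>/\<bar>\<gamma>0\<bar>))" using Bd Dpos e0 gpos by simp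
  qed
qed
lemma final_o:
  fixes f h :: "real \<Rightarrow> real" and K :: real
  assumes "eventually (\<lambda>e. 0 \<le> f e \<and> f e \<le> K * h e) (at_right 0)" "h \<in> o[at_right 0](\<lambda>e. e^2)"
  shows "f \<in> o[at_right 0](\<lambda>e. e^2)"
proof -
  have "f \<in> O[at_right 0](h)"
  proof (rule bigoI[where c = "\<bar>K\<bar>"])
    show "eventually (\<lambda>x. norm (f x) \<le> \<bar>K\<bar> * norm (h x)) (at_right 0)"
      using assms(1)
    proof eventually_elim
      case (elim x)
      have "K * h x \<le> \<bar>K * h x\<bar>" by (rule abs_ge_self)
      then show ?case using elim by (simp add: abs_mult)
    qed
  qed
  from landau_o.big_small_trans[OF this assms(2)] show ?thesis .
qed

lemma powr_small:
  assumes "q > 2"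
  shows "(\<lambda>e::real. e powr q) \<in> o[at_right 0](\<lambda>e. e^2)"
proof (rule smalloI_tendsto)
  have lim: "((\<lambda>e::real. e powr (q-2)) \<longlongrightarrow> 0) (at_right 0)"
    by (rule tendsto_zero_powrI) (use assms in \<open>auto intro: tendsto_ident_at eventually_at_rightI[of 0 1]\<close>)
  have ev: "eventually (\<lambda>e::real. e powr (q-2) = e powr q / e^2) (at_right 0)"
  proof (rule eventually_at_rightI[of 0 1])
    fix e :: real assume e: "e \<in> {0<..<1}"
    have "e powr (q-2) = e powr q / e powr 2" by (rule powr_diff)
    also have "e powr 2 = e^2" using e by (subst powr_numeral) auto
    finally show "e powr (q-2) = e powr q / e^2" .
  qed simp
  show "((\<lambda>e::real. e powr q / e^2) \<longlongrightarrow> 0) (at_right 0)"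
    using tendsto_cong[OF ev] lim by blast
  show "eventually (\<lambda>e::real. e^2 \<noteq> 0) (at_right 0)"
    by (rule eventually_at_rightI[of 0 1]) auto
qed

lemma pow_exp: assumes "0 \<le> (u::real)" shows "u^n / fact n \<le> exp u"
proof -
  have s: "(\<lambda>k. u^k /\<^sub>R fact k) sums exp u" by (rule exp_converges)
  have "sum (\<lambda>k. u^k /\<^sub>R fact k) {n} \<le> suminf (\<lambda>k. u^k /\<^sub>R fact k)"
    by (rule sum_le_suminf) (use s assms in \<open>auto simp: sums_summable\<close>)
  also have "\<dots> = exp u" using s sums_unique by metis
  finally show ?thesis by (simp add: divide_inverse mult.commute)
qed

lemma powr_exp: assumes "0 < (u::real)" "0 \<le> c" shows "u powr c \<le> fact (nat \<lceil>c\<rceil>) * exp u"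
proof (cases "u \<le> 1")
  case True
  have "u powr c \<le> 1" using True assms by (simp add: powr_le1)
  also have "1 \<le> exp u" using assms by simp
  also have "exp u \<le> fact (nat \<lceil>c\<rceil>) * exp u" by simp
  finally show ?thesis .
next
  case False
  have "u powr c \<le> u powr (real (nat \<lceil>c\<rceil>))" using False assms
    by (intro powr_mono) linarith+
  also have "\<dots> = u ^ nat \<lceil>c\<rceil>" by (rule powr_realpow[OF assms(1)])
  also have "\<dots> \<le> fact (nat \<lceil>c\<rceil>) * exp u" using pow_exp[of u "nat \<lceil>c\<rceil>"] assms
    by (simp add: divide_le_eq mult.commute)
  finally show ?thesis .
qed

lemma exp_small:
  fixes e :: real assumes "0 < e" shows "exp (- 1 / (2*e)) \<le> 48 * e powr 3"
proof -
  define y where "y = 1/(2*e)"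
  have y: "y > 0" using assms by (simp add: y_def)
  have "y^3 / fact 3 \<le> exp y" using pow_exp[of y 3] y by simp
  then have "y^3 \<le> 6 * exp y" by (simp add: fact_numeral)
  then have "exp (-y) \<le> 6 / y^3" using y by (simp add: exp_minus field_simps)
  also have "6 / y^3 = 48 * e^3" using assms by (simp add: y_def field_simps power3_eq_cube)
  also have "e^3 = e powr 3" using assms by (simp add: powr_realpow)
  finally show ?thesis by (simp add: y_def)
qed


lemma neg_case:
  fixes \<gamma>0 \<mu>0 \<sigma>0 :: real
  assumes g1: "\<gamma>0 > -1/2" and g2: "\<gamma>0 < 0" and s0: "\<sigma>0 > 0"
  shows "(\<lambda>\<epsilon>. measure (gev_measure (\<gamma>0,\<mu>0,\<sigma>0)) (UNIV - gev_common_support (\<gamma>0,\<mu>0,\<sigma>0) \<epsilon>)) \<in> o[at_right 0](\<lambda>e. e^2)"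
    (is "?f \<in> _")
proof -
  define D where "D = 2*(2+\<bar>\<gamma>0\<bar>+\<sigma>0/\<bar>\<gamma>0\<bar>)"
  define p where "p = -(\<gamma>0+1)/\<gamma>0"
  define K where "K = (1/\<sigma>0) * (D/\<sigma>0) powr p * (2*(D/\<bar>\<gamma>0\<bar>))"
  have g0: "\<gamma>0 \<noteq> 0" using g2 by simp
  have Dpos: "D > 0" unfolding D_def using s0 g0 by (simp add: add_pos_nonneg)
  have p0: "p \<ge> 0" unfolding p_def by (rule divide_nonpos_neg) (use g1 g2 in auto)
  have q: "p + 1 > 2"
  proof -
    have "p + 1 = -1/\<gamma>0" unfolding p_def using g0 by (simp add: field_simps)
    also have "-1/\<gamma>0 > 2" using g1 g2 by (simp add: field_simps)
    finally show ?thesis .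
  qed
  have ev: "eventually (\<lambda>e. 0 \<le> ?f e \<and> ?f e \<le> K * e powr (p+1)) (at_right 0)"
  proof (rule eventually_at_rightI[of 0 "min 1 (\<bar>\<gamma>0\<bar>/2)"])
    fix e :: real assume e: "e \<in> {0<..<min 1 (\<bar>\<gamma>0\<bar>/2)}"
    have bound: "?f e \<le> ((1/\<sigma>0) * (D*e/\<sigma>0) powr p) * (2*(D*e/\<bar>\<gamma>0\<bar>))"
    proof (rule nz_case[OF g0 s0 _ _ _ D_def])
      show "0 < e" "e \<le> 1" "e \<le> \<bar>\<gamma>0\<bar>/2" using e by auto
      show "0 \<le> (1/\<sigma>0) * (D*e/\<sigma>0) powr p" using s0 by simp
      fix x assume w1: "0 < \<sigma>0+\<gamma>0*(x-\<mu>0)" and w2: "\<sigma>0+\<gamma>0*(x-\<mu>0) \<le> D*e"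
      define w where "w = \<sigma>0+\<gamma>0*(x-\<mu>0)"
      define u where "u = (w/\<sigma>0) powr (-1/\<gamma>0)"
      have dens: "gev_density (\<gamma>0,\<mu>0,\<sigma>0) x = (1/\<sigma>0) * exp (-u) * u powr (\<gamma>0+1)"
        using dens_nz[OF g0 s0, of \<mu>0 x] w1 unfolding u_def w_def by simp
      have pe: "(-1/\<gamma>0)*(\<gamma>0+1) = p" unfolding p_def using g0 by (simp add: field_simps)
      have "u powr (\<gamma>0+1) = (w/\<sigma>0) powr p" unfolding u_def by (simp only: powr_powr pe)
      also have "\<dots> \<le> (D*e/\<sigma>0) powr p"
        using p0 w1 w2 s0 unfolding w_def by (intro powr_mono2 divide_right_mono) auto
      finally have A: "u powr (\<gamma>0+1) \<le> (D*e/\<sigma>0) powr p" .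
      have B: "exp (-u) \<le> 1" unfolding u_def by simp
      have "exp (-u) * u powr (\<gamma>0+1) \<le> 1 * (D*e/\<sigma>0) powr p"
        using A B by (intro mult_mono) auto
      then show "gev_density (\<gamma>0,\<mu>0,\<sigma>0) x \<le> (1/\<sigma>0) * (D*e/\<sigma>0) powr p"
        unfolding dens using s0 by (simp add: mult.assoc divide_right_mono)
    qed
    have "(D*e/\<sigma>0) powr p = ((D/\<sigma>0) * e) powr p" by simp
    also have "\<dots> = (D/\<sigma>0) powr p * e powr p"
      by (rule powr_mult)
    finally have E1: "(D*e/\<sigma>0) powr p = (D/\<sigma>0) powr p * e powr p" .
    have E2: "e powr (p+1) = e powr p * e" using e by (simp add: powr_add)
    have alg: "\<And>A E s g D e::real. (1/s) * (A * E) * (2*(D*e/g)) = ((1/s) * A * (2*(D/g))) * (E * e)"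
      by (simp add: field_simps)
    have "((1/\<sigma>0) * (D*e/\<sigma>0) powr p) * (2*(D*e/\<bar>\<gamma>0\<bar>)) = K * e powr (p+1)"
      unfolding K_def E1 E2 by (rule alg)
    then show "0 \<le> ?f e \<and> ?f e \<le> K * e powr (p+1)" using bound by simp
  qed (use g0 in simp)
  show ?thesis by (rule final_o[OF ev powr_small[OF q]])
qed


lemma pos_case:
  fixes \<gamma>0 \<mu>0 \<sigma>0 :: real
  assumes g2: "\<gamma>0 > 0" and s0: "\<sigma>0 > 0"
  shows "(\<lambda>\<epsilon>. measure (gev_measure (\<gamma>0,\<mu>0,\<sigma>0)) (UNIV - gev_common_support (\<gamma>0,\<mu>0,\<sigma>0) \<epsilon>)) \<in> o[at_right 0](\<lambda>e. e^2)"
    (is "?f \<in> _")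
proof -
  define D where "D = 2*(2+\<bar>\<gamma>0\<bar>+\<sigma>0/\<bar>\<gamma>0\<bar>)"
  define M :: real where "M = fact (nat \<lceil>4*\<gamma>0+1\<rceil>)"
  define K where "K = (M/\<sigma>0) * (D/\<sigma>0)^3 * (2*(D/\<bar>\<gamma>0\<bar>))"
  have g0: "\<gamma>0 \<noteq> 0" using g2 by simp
  have Dpos: "D > 0" unfolding D_def using s0 g0 by (simp add: add_pos_nonneg)
  have Mpos: "M > 0" unfolding M_def by simp
  have ev: "eventually (\<lambda>e. 0 \<le> ?f e \<and> ?f e \<le> K * e powr 4) (at_right 0)"
  proof (rule eventually_at_rightI[of 0 "min 1 (\<bar>\<gamma>0\<bar>/2)"])
    fix e :: real assume e: "e \<in> {0<..<min 1 (\<bar>\<gamma>0\<bar>/2)}"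
    have epos: "e > 0" using e by simp
    have bound: "?f e \<le> ((M/\<sigma>0) * (D*e/\<sigma>0)^3) * (2*(D*e/\<bar>\<gamma>0\<bar>))"
    proof (rule nz_case[OF g0 s0 _ _ _ D_def])
      show "0 < e" "e \<le> 1" "e \<le> \<bar>\<gamma>0\<bar>/2" using e by auto
      show "0 \<le> (M/\<sigma>0) * (D*e/\<sigma>0)^3" using s0 Mpos Dpos epos by simp
      fix x assume w1: "0 < \<sigma>0+\<gamma>0*(x-\<mu>0)" and w2: "\<sigma>0+\<gamma>0*(x-\<mu>0) \<le> D*e"
      define w where "w = \<sigma>0+\<gamma>0*(x-\<mu>0)"
      define u where "u = (w/\<sigma>0) powr (-1/\<gamma>0)"
      have wpos: "w/\<sigma>0 > 0" using w1 s0 unfolding w_def by simp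
      have upos: "u > 0" unfolding u_def using wpos by (simp only: powr_gt_zero)
      have dens: "gev_density (\<gamma>0,\<mu>0,\<sigma>0) x = (1/\<sigma>0) * (exp (-u) * u powr (\<gamma>0+1))"
        using dens_nz[OF g0 s0, of \<mu>0 x] w1 unfolding u_def w_def by simp
      have h1: "u powr (4*\<gamma>0+1) \<le> M * exp u"
        unfolding M_def using powr_exp[OF upos, of "4*\<gamma>0+1"] g2 by simp
      have h2: "u powr (\<gamma>0+1) = u powr (4*\<gamma>0+1) * u powr (-3*\<gamma>0)"
        by (simp add: powr_add[symmetric])
      have "exp (-u) * u powr (4*\<gamma>0+1) \<le> exp (-u) * (M * exp u)"
        using h1 by (simp add: mult_left_mono)
      also have "\<dots> = M" by (simp add: exp_minus field_simps)
      finally have h3': "exp (-u) * u powr (4*\<gamma>0+1) \<le> M" .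
      have h3: "exp (-u) * u powr (\<gamma>0+1) \<le> M * u powr (-3*\<gamma>0)"
        unfolding h2 using mult_right_mono[OF h3', of "u powr (-3*\<gamma>0)"] by (simp add: mult.assoc)
      define U where "U = (D*e/\<sigma>0) powr (-1/\<gamma>0)"
      have Upos: "U > 0" unfolding U_def using Dpos epos s0 by simp
      have h4: "U \<le> u" unfolding U_def u_def
        using g2 wpos w2 s0 unfolding w_def by (intro powr_mono2' divide_right_mono) auto
      have h5: "u powr (-3*\<gamma>0) \<le> U powr (-3*\<gamma>0)"
        using g2 Upos h4 by (intro powr_mono2') auto
      have pe: "(-1/\<gamma>0)*(-3*\<gamma>0) = 3" using g0 by (simp add: field_simps)
      have h6: "U powr (-3*\<gamma>0) = (D*e/\<sigma>0)^3"
        unfolding U_def powr_powr pe using Dpos epos s0 by (simp add: powr_numeral)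
      have h7: "M * u powr (-3*\<gamma>0) \<le> M * U powr (-3*\<gamma>0)"
        by (rule mult_left_mono[OF h5]) (use Mpos in simp)
      have "exp (-u) * u powr (\<gamma>0+1) \<le> M * (D*e/\<sigma>0)^3"
        using order_trans[OF h3 h7] unfolding h6 .
      then show "gev_density (\<gamma>0,\<mu>0,\<sigma>0) x \<le> (M/\<sigma>0) * (D*e/\<sigma>0)^3"
        unfolding dens using s0 by (simp add: divide_right_mono)
    qed
    have "e powr 4 = e^4" using epos by (simp add: powr_numeral)
    moreover have alg: "\<And>M s D e g::real. s \<noteq> 0 \<Longrightarrow> g \<noteq> 0 \<Longrightarrow> ((M/s) * (D*e/s)^3) * (2*(D*e/g)) = ((M/s) * (D/s)^3 * (2*(D/g))) * e^4"
      by (simp add: field_simps power4_eq_xxxx power3_eq_cube)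
    ultimately have "((M/\<sigma>0) * (D*e/\<sigma>0)^3) * (2*(D*e/\<bar>\<gamma>0\<bar>)) = K * e powr 4"
      unfolding K_def using s0 g0 by (simp only:)
    then show "0 \<le> ?f e \<and> ?f e \<le> K * e powr 4" using bound by simp
  qed (use g0 in simp)
  show ?thesis by (rule final_o[OF ev powr_small[of 4]]) simp
qed


lemma dens0_bound:
  fixes \<mu>0 \<sigma>0 x :: real
  assumes s0: "\<sigma>0 > 0"
  shows "gev_density (0,\<mu>0,\<sigma>0) x \<le> (2/\<sigma>0) * exp (- \<bar>x-\<mu>0\<bar>/\<sigma>0)"
proof -
  define z where "z = (x-\<mu>0)/\<sigma>0"
  define u where "u = exp (-z)"
  have upos: "u > 0" unfolding u_def by simp
  have dens: "gev_density (0,\<mu>0,\<sigma>0) x = (1/\<sigma>0) * (exp (-u) * u)"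
    unfolding gev_density_def gev_u_def Let_def u_def z_def using upos[unfolded u_def z_def]
    by (simp add: powr_one)
  have az: "\<bar>z\<bar> = \<bar>x-\<mu>0\<bar>/\<sigma>0" unfolding z_def using s0 by simp
  have key: "exp (-u) * u \<le> 2 * exp (- \<bar>z\<bar>)"
  proof (cases "z \<ge> 0")
    case True
    have "exp (-u) * u \<le> 1 * u" using upos by (intro mult_right_mono) auto
    also have "\<dots> = exp (- \<bar>z\<bar>)" using True unfolding u_def by simp
    finally show ?thesis using exp_ge_zero[of "- \<bar>z\<bar>"] by linarith
  next
    case False
    have "u^2 / fact 2 \<le> exp u" using pow_exp[of u 2] upos by simp
    then have "u * u \<le> 2 * exp u" by (simp add: power2_eq_square)
    then have "exp (-u) * u * u \<le> 2" by (simp add: exp_minus field_simps)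
    then have "exp (-u) * u \<le> 2 / u" using upos by (simp add: field_simps)
    also have "2 / u = 2 * exp (- \<bar>z\<bar>)" using False unfolding u_def by (simp add: exp_minus field_simps)
    finally show ?thesis .
  qed
  show ?thesis unfolding dens using key s0 az by (simp add: divide_right_mono)
qed

lemma zero_case:
  fixes \<mu>0 \<sigma>0 :: real
  assumes s0: "\<sigma>0 > 0"
  shows "(\<lambda>\<epsilon>. measure (gev_measure (0,\<mu>0,\<sigma>0)) (UNIV - gev_common_support (0,\<mu>0,\<sigma>0) \<epsilon>)) \<in> o[at_right 0](\<lambda>e. e^2)"
    (is "?f \<in> _")
proof -
  define K where "K = 8 * exp (1/\<sigma>0) * exp (\<bar>\<mu>0\<bar>/(2*\<sigma>0)) * 48"
  have ev: "eventually (\<lambda>e. 0 \<le> ?f e \<and> ?f e \<le> K * e powr 3) (at_right 0)"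
  proof (rule eventually_at_rightI[of 0 1])
    fix e :: real assume e: "e \<in> {0<..<1}"
    have epos: "e > 0" using e by simp
    define T where "T = \<sigma>0/e - 2"
    define a where "a = 1/(2*\<sigma>0)"
    have apos: "a > 0" unfolding a_def using s0 by simp
    define C where "C = (2/\<sigma>0) * exp (-T/(2*\<sigma>0)) * exp (\<bar>\<mu>0\<bar>/(2*\<sigma>0))"
    have Cpos: "C \<ge> 0" unfolding C_def using s0 by simp
    let ?B = "{x. \<sigma>0 \<le> e*(2+\<bar>x-\<mu>0\<bar>)}"
    have bound: "?f e \<le> C * (2/a)"
    proof (rule meas_le[where B = ?B and g = "\<lambda>x. C * exp (- a * \<bar>x\<bar>)"])
      show "UNIV - gev_common_support (0, \<mu>0, \<sigma>0) e \<subseteq> ?B"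
        using bad_bound[of _ 0 \<mu>0 \<sigma>0 e] e by auto
      show "?B \<in> sets borel" by measurable
      fix x assume xB: "x \<in> ?B"
      have tT: "T \<le> \<bar>x-\<mu>0\<bar>" using xB epos unfolding T_def by (simp add: divide_le_eq algebra_simps)
      have xx: "\<bar>x\<bar> \<le> \<bar>x-\<mu>0\<bar> + \<bar>\<mu>0\<bar>" by linarith
      have h: "T + \<bar>x\<bar> \<le> \<bar>\<mu>0\<bar> + 2*\<bar>x-\<mu>0\<bar>" using tT xx by (smt (verit))
      have h2: "\<sigma>0*(T + \<bar>x\<bar>) \<le> \<sigma>0*(\<bar>\<mu>0\<bar> + 2*\<bar>x-\<mu>0\<bar>)" by (rule mult_left_mono) (use h s0 in auto)
      have "- \<bar>x-\<mu>0\<bar>/\<sigma>0 \<le> -T/(2*\<sigma>0) + \<bar>\<mu>0\<bar>/(2*\<sigma>0) + (- a * \<bar>x\<bar>)"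
        unfolding a_def using s0 h2 by (simp add: field_simps)
      then have "exp (- \<bar>x-\<mu>0\<bar>/\<sigma>0) \<le> exp (-T/(2*\<sigma>0)) * exp (\<bar>\<mu>0\<bar>/(2*\<sigma>0)) * exp (- a * \<bar>x\<bar>)"
        by (simp add: exp_add[symmetric])
      then have "(2/\<sigma>0) * exp (- \<bar>x-\<mu>0\<bar>/\<sigma>0) \<le> C * exp (- a * \<bar>x\<bar>)"
        unfolding C_def using s0 by (simp add: mult.assoc divide_right_mono)
      then show "gev_density (0, \<mu>0, \<sigma>0) x \<le> C * exp (- a * \<bar>x\<bar>)"
        using dens0_bound[OF s0, of \<mu>0 x] by linarith
    next
      have "(\<integral>\<^sup>+x. ennreal (C * exp (- a * \<bar>x\<bar>)) * indicator ?B x \<partial>lborel) \<le> (\<integral>\<^sup>+x. ennreal C * ennreal (exp (- a * \<bar>x\<bar>)) \<partial>lborel)"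
        using Cpos by (intro nn_integral_mono) (auto simp: indicator_def ennreal_mult)
      also have "\<dots> = ennreal C * (\<integral>\<^sup>+x. ennreal (exp (- a * \<bar>x\<bar>)) \<partial>lborel)"
        by (rule nn_integral_cmult) measurable
      also have "\<dots> \<le> ennreal C * ennreal (2/a)"
        using exp_abs_int[OF apos] by (rule mult_left_mono) simp
      also have "\<dots> = ennreal (C * (2/a))" by (rule ennreal_mult[symmetric]) (use Cpos apos in auto)
      finally show "(\<integral>\<^sup>+x. ennreal (C * exp (- a * \<bar>x\<bar>)) * indicator ?B x \<partial>lborel) \<le> ennreal (C * (2/a))" .
      show "0 \<le> C * (2/a)" using Cpos apos by simp
    qed
    have "C * (2/a) = 8 * exp (1/\<sigma>0) * exp (\<bar>\<mu>0\<bar>/(2*\<sigma>0)) * exp (- 1 / (2*e))"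
    proof -
      have "-T/(2*\<sigma>0) = 1/\<sigma>0 + (- 1/(2*e))" unfolding T_def using s0 epos by (simp add: field_simps)
      then have Teq: "exp (-T/(2*\<sigma>0)) = exp (1/\<sigma>0) * exp (- 1 / (2*e))" by (simp add: exp_add[symmetric] del: exp_add)
      show ?thesis unfolding C_def a_def Teq using s0 by (simp add: field_simps)
    qed
    also have "\<dots> \<le> 8 * exp (1/\<sigma>0) * exp (\<bar>\<mu>0\<bar>/(2*\<sigma>0)) * (48 * e powr 3)"
      using exp_small[OF epos] by (intro mult_left_mono) auto
    also have "\<dots> = K * e powr 3" unfolding K_def by simp
    finally show "0 \<le> ?f e \<and> ?f e \<le> K * e powr 3" using bound by simp
  qed simp
  show ?thesis by (rule final_o[OF ev powr_small[of 3]]) simp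
qed


theorem lemmaE1:
  fixes \<gamma>0 \<mu>0 \<sigma>0 :: real
  assumes "\<gamma>0 > - 1 / 2" and "\<sigma>0 > 0"
  shows "(\<lambda>\<epsilon>. measure (gev_measure (\<gamma>0, \<mu>0, \<sigma>0))
             (UNIV - gev_common_support (\<gamma>0, \<mu>0, \<sigma>0) \<epsilon>))
         \<in> o[at_right 0](\<lambda>\<epsilon>. \<epsilon> ^ 2)"
proof -
  consider "\<gamma>0 < 0" | "\<gamma>0 = 0" | "\<gamma>0 > 0" by linarith
  then show ?thesis
  proof cases
    case 1 then show ?thesis using neg_case[of \<gamma>0 \<sigma>0 \<mu>0] assms by simp
  next
    case 2 then show ?thesis using zero_case[of \<sigma>0 \<mu>0] assms by simp
  next
    case 3 then show ?thesis using pos_case[of \<gamma>0 \<sigma>0 \<mu>0] assms by simp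
  qed
qed

end
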